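(* Let $U$ and $V$ be linear subspaces of $\mathbb{R}^d$ such that $U\cap V^\perp=\{0\}$. Then there exists a positive definite linear map $H:\mathbb{R}^d\to\mathbb{R}^d$ such that $H(U)\subset V$. *)

theory Defs
  imports "HOL-Analysis.Analysis"
begin

definition pos_def_matrix :: "real^'n^'n \<Rightarrow> bool" where
  "pos_def_matrix H \<longleftrightarrow> transpose H = H \<and> (\<forall>x. x \<noteq> 0 \<longrightarrow> x \<bullet> (H *v x) > 0)"

end

theory Submission
  imports Defs
begin

theorem lemma7:
  fixes U V :: "(real^'n) set"
  assumes "subspace U" and "subspace V"
    and "U \<inter> orthogonal_comp V = {0}"
  shows "\<exists>H :: real^'n^'n. pos_def_matrix H \<and> (\<lambda>x. H *v x) ` U \<subseteq> V"
proof -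
  obtain B where BV: "B \<subseteq> V" and ortho: "pairwise orthogonal B" "\<And>x. x \<in> B \<Longrightarrow> norm x = 1"
    and "independent B" "card B = dim V" "span B = V"
    using orthonormal_basis_subspace [OF assms(2)] by metis
  then have fB: "finite B"
    by (simp add: indep_card_eq_dim_span)
  have *: "\<forall>x\<in>B. \<forall>y\<in>B. x \<bullet> y = (if x=y then 1 else 0)"
    using ortho norm_eq_1 by (auto simp: orthogonal_def pairwise_def)
  define Q where "Q = (\<lambda>v. \<Sum>b\<in>B. (v \<bullet> b) *\<^sub>R b)"
  have linQ: "linear Q"
    unfolding Q_def linear_iff
    by (simp add: inner_add_left scaleR_add_left sum.distrib scaleR_sum_right)
  have QV: "Q x \<in> V" for x
    unfolding Q_def by (metis (no_types, lifting) \<open>span B = V\<close> assms(2) subspace_sum span_base span_mul)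
  have Qperp: "y \<bullet> (x - Q x) = 0" if "y \<in> V" for x y
  proof -
    from that \<open>span B = V\<close> span_finite [OF fB]
    obtain u where u: "y = (\<Sum>b\<in>B. u b *\<^sub>R b)"
      by auto
    have "b \<bullet> (x - Q x) = 0" if "b \<in> B" for b
      using that fB unfolding Q_def
      by (simp add: * algebra_simps inner_sum_right if_distrib [of "(*)v" for v] inner_commute cong: if_cong)
    then show "y \<bullet> (x - Q x) = 0"
      by (simp add: u inner_sum_left)
  qed
  have Qsym: "Q x \<bullet> y = x \<bullet> Q y" for x y
    unfolding Q_def by (simp add: inner_sum_left inner_sum_right mult.commute inner_commute)
  have Qperp0: "Q w = 0" if "w \<in> orthogonal_comp V" for w
  proof -
    have "w \<bullet> b = 0" if "b \<in> B" for b
      using \<open>w \<in> orthogonal_comp V\<close> BV that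
      by (auto simp: orthogonal_comp_def orthogonal_def inner_commute)
    then show ?thesis unfolding Q_def by simp
  qed
  have perpI: "x - Q x \<in> orthogonal_comp V" for x
    using Qperp by (auto simp: orthogonal_comp_def orthogonal_def)
  have injQ: "inj_on Q (span U)"
  proof (rule inj_onI)
    fix u1 u2 assume u: "u1 \<in> span U" "u2 \<in> span U" "Q u1 = Q u2"
    have d: "u1 - u2 \<in> U" using u assms(1) by (metis span_eq_iff subspace_diff)
    have "Q (u1 - u2) = 0" using u linQ by (simp add: linear_diff)
    then have "u1 - u2 \<in> orthogonal_comp V" using perpI[of "u1 - u2"] by simp
    with d have "u1 - u2 \<in> U \<inter> orthogonal_comp V" by blast
    then have "u1 - u2 = 0" using assms(3) by blast
    then show "u1 = u2" by simp
  qed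
  obtain g where lg: "linear g" and gQ: "\<And>x. x \<in> span U \<Longrightarrow> g (Q x) = x"
    using linear_inj_on_left_inverse[OF linQ injQ] by blast
  define M where "M = (\<lambda>x. g (Q x) - Q (g (Q x)))"
  define M' where "M' = (\<lambda>y. Q (adjoint g (y - Q y)))"
  have linM: "linear M" unfolding M_def linear_iff using linQ lg
    by (simp add: linear_add linear_scale linear_diff algebra_simps)
  have MM': "M x \<bullet> y = x \<bullet> M' y" for x y
  proof -
    have "M x \<bullet> y = g (Q x) \<bullet> (y - Q y)"
      unfolding M_def by (simp add: inner_diff_left inner_diff_right Qsym)
    also have "\<dots> = Q x \<bullet> adjoint g (y - Q y)" by (simp add: adjoint_works[OF lg])
    also have "\<dots> = x \<bullet> M' y" unfolding M'_def by (simp add: Qsym)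
    finally show ?thesis .
  qed
  have linM': "linear M'" unfolding M'_def linear_iff using linQ adjoint_linear[OF lg]
    by (simp add: linear_add linear_scale linear_diff algebra_simps)
  obtain K where K: "K > 0" "\<And>x. norm (M x) \<le> K * norm x"
    using linear_bounded_pos[OF linM] by blast
  define c where "c = K^2 + 1"
  define h where "h = (\<lambda>x. c *\<^sub>R Q x + (x - Q x) - M x - M' x)"
  have linh: "linear h" unfolding h_def linear_iff using linQ linM linM'
    by (simp add: linear_add linear_scale linear_diff algebra_simps)
  define H where "H = matrix h"
  have Hv: "H *v x = h x" for x
    unfolding H_def using matrix_vector_mul(2)[OF linh] by metis
  have hsym: "h x \<bullet> y = x \<bullet> h y" for x y
  proof -
    have "M' x \<bullet> y = x \<bullet> M y" using MM'[of y x] by (simp add: inner_commute)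
    then show ?thesis
      unfolding h_def using MM'[of x y] Qsym[of x y]
      by (simp add: inner_diff_left inner_diff_right inner_add_left inner_add_right)
  qed
  have "adjoint h = h" using adjoint_unique[of h h] hsym by blast
  then have tH: "transpose H = H"
    unfolding H_def using matrix_adjoint[OF linh] by simp
  have pos: "x \<bullet> (H *v x) > 0" if "x \<noteq> 0" for x
  proof -
    define a where "a = norm (Q x)"
    define b where "b = norm (x - Q x)"
    have Q0: "Q x \<bullet> (x - Q x) = 0" using Qperp[OF QV] by simp
    have MQ: "M x = M (Q x)" unfolding M_def
      using linQ Qperp0[OF perpI[of x]] by (simp add: linear_diff)
    have Mperp: "M x \<in> orthogonal_comp V" unfolding M_def by (rule perpI)
    have "Q x \<bullet> M x = 0" using Mperp QV by (auto simp: orthogonal_comp_def orthogonal_def)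
    then have Mx: "x \<bullet> M x = (x - Q x) \<bullet> M x" by (simp add: inner_diff_left)
    have "\<bar>x \<bullet> M x\<bar> \<le> b * (K * a)"
      unfolding Mx b_def a_def using K(2)[of "Q x"] MQ
      by (metis Cauchy_Schwarz_ineq2 mult_left_mono norm_ge_zero order_trans)
    moreover have MM'x: "x \<bullet> M' x = x \<bullet> M x" using MM'[of x x] by (simp add: inner_commute)
    have QQ: "Q x \<bullet> x = Q x \<bullet> Q x" using Q0 by (simp add: inner_diff_right)
    moreover have "x \<bullet> Q x = a^2" unfolding a_def power2_norm_eq_inner
      using QQ by (simp add: inner_commute)
    moreover have "x \<bullet> (x - Q x) = b^2" unfolding b_def power2_norm_eq_inner
      using Q0 by (simp add: inner_diff_left)
    ultimately have ge: "x \<bullet> h x \<ge> c * a^2 + b^2 - 2 * (K * a * b)"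
      unfolding h_def using MM'x by (simp add: inner_diff_right inner_add_right algebra_simps abs_le_iff)
    have "c * a^2 + b^2 - 2 * (K * a * b) = (K * a - b)^2 + a^2"
      unfolding c_def by (simp add: power2_eq_square algebra_simps)
    moreover have "a \<noteq> 0 \<or> b \<noteq> 0"
      using that unfolding a_def b_def by auto
    moreover have "(K * a - b)^2 + a^2 > 0" if "a \<noteq> 0 \<or> b \<noteq> 0"
      using that by (cases "a = 0") (auto intro: add_nonneg_pos)
    ultimately show ?thesis using ge Hv by auto
  qed
  have img: "(\<lambda>x. H *v x) ` U \<subseteq> V"
  proof
    fix y assume "y \<in> (\<lambda>x. H *v x) ` U"
    then obtain u where u: "u \<in> U" "y = h u" using Hv by auto
    have "M u = u - Q u" unfolding M_def using gQ[of u] u(1) by (simp add: span_base)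
    then have "h u = c *\<^sub>R Q u - M' u" unfolding h_def by simp
    moreover have "M' u \<in> V" unfolding M'_def by (rule QV)
    ultimately show "y \<in> V" using u QV assms(2)
      by (simp add: subspace_diff subspace_scale)
  qed
  show ?thesis using tH pos img unfolding pos_def_matrix_def by blast
qed

end
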